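(* Let $k$ be a symmetric positive semidefinite kernel on $\mathbb{R}^d$ which is Lipschitz continuous in each argument with constant $L_k>0$, let $\sigma_n^2>0$, and let $(\bm{x}^{(i)})_{i=1}^\infty$ be an infinite sequence of training inputs in $\mathbb{X}\subseteq\mathbb{R}^d$. Let $\mathbb{D}_N^x=\{\bm{x}^{(i)}\}_{i=1}^N$, let $\sigma_N^2(\cdot)$ be the GP posterior variance based on $\mathbb{D}_N^x$, and let $\mathbb{B}_\rho^N(\bm{x})=\{\bm{x}'\in\mathbb{D}_N^x:\|\bm{x}'-\bm{x}\|\le\rho\}$. Fix $\bm{x}\in\mathbb{X}$. If there is a function $\rho:\mathbb{N}\to\mathbb{R}_+$ with $\rho(N)\le k(\bm{x},\bm{x})/L_k$ for all $N$, $\lim_{N\to\infty}\rho(N)=0$ and $\lim_{N\to\infty}|\mathbb{B}_{\rho(N)}^N(\bm{x})|=\infty$, then $\lim_{N\to\infty}\sigma_N^2(\bm{x})=0$.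
   Context: Lipschitz in each argument with constant $L_k$ means $|k(\bm{x},\bm{z})-k(\bm{y},\bm{z})|\le L_k\|\bm{x}-\bm{y}\|$ and $|k(\bm{z},\bm{x})-k(\bm{z},\bm{y})|\le L_k\|\bm{x}-\bm{y}\|$ for all $\bm{x},\bm{y},\bm{z}$. Gaussian process posterior variance: with $K_{N,ij}=k(\bm{x}^{(i)},\bm{x}^{(j)})$, $k_{N,i}(\bm{x})=k(\bm{x},\bm{x}^{(i)})$, $\bm{A}_N=\bm{K}_N+\sigma_n^2\bm{I}_N$, $\sigma_N^2(\bm{x})=k(\bm{x},\bm{x})-\bm{k}_N(\bm{x})^T\bm{A}_N^{-1}\bm{k}_N(\bm{x})$. $|\cdot|$ denotes cardinality (counted with multiplicity). *)

theory Defs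
  imports "HOL-Analysis.Analysis"
begin

definition sym_psd_kernel :: "('a \<Rightarrow> 'a \<Rightarrow> real) \<Rightarrow> bool" where
  "sym_psd_kernel k \<longleftrightarrow> (\<forall>x y. k x y = k y x) \<and>
     (\<forall>(n::nat) (p::nat \<Rightarrow> 'a) (c::nat \<Rightarrow> real).
        (\<Sum>i<n. \<Sum>j<n. c i * c j * k (p i) (p j)) \<ge> 0)"

definition lipschitz_each_arg :: "('a::real_normed_vector \<Rightarrow> 'a \<Rightarrow> real) \<Rightarrow> real \<Rightarrow> bool" where
  "lipschitz_each_arg k L \<longleftrightarrow>
     (\<forall>x y z. \<bar>k x z - k y z\<bar> \<le> L * norm (x - y) \<and> \<bar>k z x - k z y\<bar> \<le> L * norm (x - y))"

text \<open>Matrix A_N = K_N + sn2 I_N, indexed by {1..N} (training inputs x 1, ..., x N).\<close>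
definition gp_A :: "('a \<Rightarrow> 'a \<Rightarrow> real) \<Rightarrow> real \<Rightarrow> (nat \<Rightarrow> 'a) \<Rightarrow> nat \<Rightarrow> nat \<Rightarrow> real" where
  "gp_A k sn2 x i j = k (x i) (x j) + (if i = j then sn2 else 0)"

definition gp_A_inv :: "('a \<Rightarrow> 'a \<Rightarrow> real) \<Rightarrow> real \<Rightarrow> (nat \<Rightarrow> 'a) \<Rightarrow> nat \<Rightarrow> nat \<Rightarrow> nat \<Rightarrow> real" where
  "gp_A_inv k sn2 x N = (SOME B. \<forall>i\<in>{1..N}. \<forall>j\<in>{1..N}.
      (\<Sum>l\<in>{1..N}. gp_A k sn2 x i l * B l j) = (if i = j then 1 else 0))"

definition gp_post_var :: "('a \<Rightarrow> 'a \<Rightarrow> real) \<Rightarrow> real \<Rightarrow> (nat \<Rightarrow> 'a) \<Rightarrow> nat \<Rightarrow> 'a \<Rightarrow> real" where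
  "gp_post_var k sn2 x N z = k z z -
     (\<Sum>i\<in>{1..N}. \<Sum>j\<in>{1..N}. k z (x i) * gp_A_inv k sn2 x N i j * k z (x j))"

text \<open>|B_rho^N(z)|: number of training inputs among x 1..x N within distance rho of z,
counted with multiplicity.\<close>
definition ball_count :: "(nat \<Rightarrow> 'a::real_normed_vector) \<Rightarrow> nat \<Rightarrow> real \<Rightarrow> 'a \<Rightarrow> nat" where
  "ball_count x N r z = card {i\<in>{1..N}. norm (x i - z) \<le> r}"

end

theory Submission
  imports Defs "Jordan_Normal_Form.Determinant"
begin


lemma sum1N: "(\<Sum>i\<in>{1..N}. f i) = (\<Sum>i<N. f (Suc i))"
  by (induct N) (auto simp: atLeastAtMostSuc_conv add.commute)

lemma sum1N': "(\<Sum>i\<in>{Suc 0..N}. f i) = (\<Sum>i<N. f (Suc i))"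
  using sum1N[of f N] by simp

lemma inv_exists:
  fixes M :: "nat \<Rightarrow> nat \<Rightarrow> real"
  assumes inj: "\<And>v. \<forall>i\<in>{1..N}. (\<Sum>j\<in>{1..N}. M i j * v j) = 0 \<Longrightarrow> \<forall>j\<in>{1..N}. v j = 0"
  shows "\<exists>B. \<forall>i\<in>{1..N}. \<forall>j\<in>{1..N}. (\<Sum>l\<in>{1..N}. M i l * B l j) = (if i = j then 1 else 0)"
proof -
  define A where "A = mat N N (\<lambda>(i,j). M (Suc i) (Suc j))"
  have A: "A \<in> carrier_mat N N" by (simp add: A_def)
  have "det A \<noteq> 0"
  proof
    assume "det A = 0"
    then obtain v where v: "v \<in> carrier_vec N" "v \<noteq> 0\<^sub>v N" "A *\<^sub>v v = 0\<^sub>v N"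
      using det_0_iff_vec_prod_zero[OF A] by auto
    define w where "w j = v $ (j - 1)" for j
    have "\<forall>i\<in>{1..N}. (\<Sum>j\<in>{1..N}. M i j * w j) = 0"
    proof
      fix i assume i: "i \<in> {1..N}"
      have "(A *\<^sub>v v) $ (i-1) = 0" using v(3) i by auto
      moreover have "(A *\<^sub>v v) $ (i-1) = (\<Sum>j<N. M i (Suc j) * w (Suc j))"
        using i v(1) by (auto simp: A_def scalar_prod_def w_def lessThan_atLeast0)
      moreover have "(\<Sum>j\<in>{1..N}. M i j * w j) = (\<Sum>j<N. M i (Suc j) * w (Suc j))" by (rule sum1N)
      ultimately show "(\<Sum>j\<in>{1..N}. M i j * w j) = 0" by simp
    qed
    then have "\<forall>j\<in>{1..N}. w j = 0" by (rule inj)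
    then have "v = 0\<^sub>v N"
      using v(1) by (intro eq_vecI) (auto simp: w_def dest!: bspec[where x="Suc _"])
    with v(2) show False by simp
  qed
  then have "A \<in> Units (ring_mat TYPE(real) N undefined)" by (rule det_non_zero_imp_unit[OF A])
  then obtain B' where B': "B' \<in> carrier_mat N N" "A * B' = 1\<^sub>m N"
    unfolding Units_def ring_mat_def by auto
  define B where "B l j = B' $$ (l - 1, j - 1)" for l j
  show ?thesis
  proof (intro exI ballI)
    fix i j assume i: "i \<in> {1..N}" and j: "j \<in> {1..N}"
    have "(A * B') $$ (i-1, j-1) = (if i = j then 1 else 0)" using B'(2) i j by auto
    moreover have "(A * B') $$ (i-1,j-1) = (\<Sum>l<N. M i (Suc l) * B (Suc l) j)"
      using i j B'(1) by (auto simp: A_def B_def scalar_prod_def lessThan_atLeast0)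
    moreover have "(\<Sum>l\<in>{1..N}. M i l * B l j) = (\<Sum>l<N. M i (Suc l) * B (Suc l) j)" by (rule sum1N)
    ultimately show "(\<Sum>l\<in>{1..N}. M i l * B l j) = (if i = j then 1 else 0)" by simp
  qed
qed


lemma quad_bound:
  fixes a :: "nat \<Rightarrow> nat \<Rightarrow> real" and b c d :: "nat \<Rightarrow> real"
  assumes fin: "finite S"
    and sym: "\<And>i j. i \<in> S \<Longrightarrow> j \<in> S \<Longrightarrow> a i j = a j i"
    and psd: "\<And>v. 0 \<le> (\<Sum>i\<in>S. \<Sum>j\<in>S. v i * v j * a i j)"
    and Ac: "\<And>i. i \<in> S \<Longrightarrow> (\<Sum>l\<in>S. a i l * c l) = b i"
  shows "2 * (\<Sum>i\<in>S. d i * b i) - (\<Sum>i\<in>S. \<Sum>j\<in>S. d i * d j * a i j) \<le> (\<Sum>i\<in>S. b i * c i)"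
proof -
  define Q where "Q v w = (\<Sum>i\<in>S. \<Sum>j\<in>S. v i * w j * a i j)" for v w :: "nat \<Rightarrow> real"
  have Qc: "Q v c = (\<Sum>i\<in>S. v i * b i)" for v
  proof -
    have "Q v c = (\<Sum>i\<in>S. v i * (\<Sum>j\<in>S. a i j * c j))"
      unfolding Q_def by (simp add: sum_distrib_left mult_ac)
    also have "\<dots> = (\<Sum>i\<in>S. v i * b i)" using Ac by simp
    finally show ?thesis .
  qed
  have cQ: "Q c v = (\<Sum>i\<in>S. v i * b i)" for v
  proof -
    have "Q c v = (\<Sum>j\<in>S. \<Sum>i\<in>S. c i * v j * a i j)"
      unfolding Q_def by (rule sum.swap)
    also have "\<dots> = (\<Sum>j\<in>S. v j * (\<Sum>i\<in>S. a j i * c i))"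
      by (intro sum.cong refl) (simp add: sum_distrib_left mult_ac sym)
    also have "\<dots> = (\<Sum>i\<in>S. v i * b i)" using Ac by simp
    finally show ?thesis .
  qed
  have exp: "Q (\<lambda>i. d i - c i) (\<lambda>i. d i - c i) = Q d d - Q d c - Q c d + Q c c"
  proof -
    have "Q (\<lambda>i. d i - c i) (\<lambda>i. d i - c i) = (\<Sum>i\<in>S. \<Sum>j\<in>S. d i * d j * a i j - d i * c j * a i j - c i * d j * a i j + c i * c j * a i j)"
      unfolding Q_def by (intro sum.cong refl) (simp add: algebra_simps)
    also have "\<dots> = Q d d - Q d c - Q c d + Q c c" unfolding Q_def by (simp add: sum.distrib sum_subtractf)
    finally show ?thesis .
  qed
  have "0 \<le> Q (\<lambda>i. d i - c i) (\<lambda>i. d i - c i)" unfolding Q_def by (rule psd)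
  then have "0 \<le> Q d d - 2 * (\<Sum>i\<in>S. d i * b i) + (\<Sum>i\<in>S. c i * b i)"
    using exp Qc cQ by simp
  then show ?thesis unfolding Q_def by (simp add: mult.commute)
qed

lemma sum_restr:
  fixes f :: "nat \<Rightarrow> real"
  assumes "finite S" "T \<subseteq> S"
  shows "(\<Sum>i\<in>S. (if i \<in> T then t else 0) * f i) = t * (\<Sum>i\<in>T. f i)"
proof -
  have "(\<Sum>i\<in>S. (if i \<in> T then t else 0) * f i) = (\<Sum>i\<in>S. if i \<in> T then t * f i else 0)"
    by (intro sum.cong refl) simp
  also have "\<dots> = (\<Sum>i\<in>S \<inter> T. t * f i)" by (rule sum.inter_restrict[OF assms(1), symmetric])
  also have "S \<inter> T = T" using assms(2) by blast
  finally show ?thesis by (simp add: sum_distrib_left)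
qed

lemma gp_quad:
  fixes v :: "nat \<Rightarrow> real" and k :: "'a \<Rightarrow> 'a \<Rightarrow> real"
  shows   "(\<Sum>i\<in>{1..N}. \<Sum>j\<in>{1..N}. v i * v j * gp_A k sn2 x i j)
   = (\<Sum>i\<in>{1..N}. \<Sum>j\<in>{1..N}. v i * v j * k (x i) (x j)) + sn2 * (\<Sum>i\<in>{1..N}. v i ^ 2)"
proof -
  have "(\<Sum>i\<in>{1..N}. \<Sum>j\<in>{1..N}. v i * v j * gp_A k sn2 x i j)
     = (\<Sum>i\<in>{1..N}. (\<Sum>j\<in>{1..N}. v i * v j * k (x i) (x j)) + sn2 * v i ^ 2)"
  proof (intro sum.cong refl)
    fix i assume i: "i \<in> {1..N}"
    have "(\<Sum>j\<in>{1..N}. v i * v j * gp_A k sn2 x i j)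
       = (\<Sum>j\<in>{1..N}. v i * v j * k (x i) (x j)) + (\<Sum>j\<in>{1..N}. if i = j then sn2 * v i ^ 2 else 0)"
    proof -
      have "(\<Sum>j\<in>{1..N}. v i * v j * gp_A k sn2 x i j)
         = (\<Sum>j\<in>{1..N}. v i * v j * k (x i) (x j) + (if i = j then sn2 * v i ^ 2 else 0))"
        by (intro sum.cong refl) (auto simp: gp_A_def algebra_simps power2_eq_square)
      then show ?thesis by (simp only: sum.distrib)
    qed
    also have "(\<Sum>j\<in>{1..N}. if i = j then sn2 * v i ^ 2 else 0) = sn2 * v i ^ 2"
      using i by simp
    finally show "(\<Sum>j\<in>{1..N}. v i * v j * gp_A k sn2 x i j)
       = (\<Sum>j\<in>{1..N}. v i * v j * k (x i) (x j)) + sn2 * v i ^ 2" .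
  qed
  also have "\<dots> = (\<Sum>i\<in>{1..N}. \<Sum>j\<in>{1..N}. v i * v j * k (x i) (x j)) + sn2 * (\<Sum>i\<in>{1..N}. v i ^ 2)"
    by (simp add: sum.distrib sum_distrib_left)
  finally show ?thesis .
qed

lemma psd_S:
  fixes v :: "nat \<Rightarrow> real" and k :: "'a \<Rightarrow> 'a \<Rightarrow> real"
  assumes "sym_psd_kernel k"
  shows "0 \<le> (\<Sum>i\<in>{1..N}. \<Sum>j\<in>{1..N}. v i * v j * k (x i) (x j))"
proof -
  have h: "\<forall>(n::nat) (p::nat \<Rightarrow> 'a) (c::nat \<Rightarrow> real). (\<Sum>i<n. \<Sum>j<n. c i * c j * k (p i) (p j)) \<ge> 0"
    using assms unfolding sym_psd_kernel_def by blast
  have "0 \<le> (\<Sum>i<N. \<Sum>j<N. v (Suc i) * v (Suc j) * k (x (Suc i)) (x (Suc j)))"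
    using h[rule_format, where n=N and p="\<lambda>i. x (Suc i)" and c="\<lambda>i. v (Suc i)"] by simp
  also have "\<dots> = (\<Sum>i\<in>{1..N}. \<Sum>j\<in>{1..N}. v i * v j * k (x i) (x j))"
    by (simp only: sum1N)
  finally show ?thesis .
qed

lemma post_var_props:
  fixes k :: "'a \<Rightarrow> 'a \<Rightarrow> real"
  assumes psdk: "sym_psd_kernel k" and sn2: "sn2 > 0"
  shows "0 \<le> gp_post_var k sn2 x N z"
    and "gp_post_var k sn2 x N z \<le> k z z - 2 * (\<Sum>i\<in>{1..N}. d i * k z (x i))
          + (\<Sum>i\<in>{1..N}. \<Sum>j\<in>{1..N}. d i * d j * k (x i) (x j)) + sn2 * (\<Sum>i\<in>{1..N}. d i ^ 2)"
proof -
  define S where "S = {1..N}"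
  have fin: "finite S" by (simp add: S_def)
  have ksym: "k u w = k w u" for u w using psdk unfolding sym_psd_kernel_def by blast
  define a where "a = gp_A k sn2 x"
  have asym: "a i j = a j i" for i j unfolding a_def gp_A_def using ksym by simp
  have Qa: "(\<Sum>i\<in>S. \<Sum>j\<in>S. v i * v j * a i j)
     = (\<Sum>i\<in>S. \<Sum>j\<in>S. v i * v j * k (x i) (x j)) + sn2 * (\<Sum>i\<in>S. v i ^ 2)" for v
    unfolding S_def a_def by (rule gp_quad)
  have psdK: "0 \<le> (\<Sum>i\<in>S. \<Sum>j\<in>S. v i * v j * k (x i) (x j))" for v
    unfolding S_def by (rule psd_S[OF psdk])
  have psdA: "0 \<le> (\<Sum>i\<in>S. \<Sum>j\<in>S. v i * v j * a i j)" for v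
    unfolding Qa using psdK[of v] sn2 by (simp add: sum_nonneg)
  have inj: "\<forall>j\<in>S. v j = 0" if h: "\<forall>i\<in>S. (\<Sum>j\<in>S. a i j * v j) = 0" for v
  proof -
    have "(\<Sum>i\<in>S. \<Sum>j\<in>S. v i * v j * a i j) = (\<Sum>i\<in>S. v i * (\<Sum>j\<in>S. a i j * v j))"
      by (simp add: sum_distrib_left mult_ac)
    also have "\<dots> = 0" using h by simp
    finally have "sn2 * (\<Sum>i\<in>S. v i ^ 2) \<le> 0" using Qa[of v] psdK[of v] by linarith
    then have "(\<Sum>i\<in>S. v i ^ 2) \<le> 0" using sn2 by (simp add: mult_le_0_iff)
    then have "(\<Sum>i\<in>S. v i ^ 2) = 0" by (meson antisym sum_nonneg zero_le_power2)
    then show ?thesis using fin by (simp add: sum_nonneg_eq_0_iff)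
  qed
  define B where "B = gp_A_inv k sn2 x N"
  have "\<exists>B. \<forall>i\<in>{1..N}. \<forall>j\<in>{1..N}. (\<Sum>l\<in>{1..N}. a i l * B l j) = (if i = j then 1 else 0)"
    by (rule inv_exists) (use inj in \<open>auto simp: S_def\<close>)
  then have AB: "\<forall>i\<in>S. \<forall>j\<in>S. (\<Sum>l\<in>S. a i l * B l j) = (if i = j then 1 else 0)"
    unfolding B_def gp_A_inv_def S_def a_def by (rule someI_ex)
  define kv where "kv i = k z (x i)" for i
  define c where "c i = (\<Sum>j\<in>S. B i j * kv j)" for i
  have Ac: "(\<Sum>l\<in>S. a i l * c l) = kv i" if i: "i \<in> S" for i
  proof -
    have "(\<Sum>l\<in>S. a i l * c l) = (\<Sum>l\<in>S. \<Sum>j\<in>S. a i l * B l j * kv j)"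
      unfolding c_def by (simp add: sum_distrib_left mult_ac)
    also have "\<dots> = (\<Sum>j\<in>S. (\<Sum>l\<in>S. a i l * B l j) * kv j)"
      by (subst sum.swap) (simp add: sum_distrib_right)
    also have "\<dots> = (\<Sum>j\<in>S. (if i = j then kv j else 0))"
      using AB i by (intro sum.cong refl) simp
    also have "\<dots> = kv i" using i fin by simp
    finally show ?thesis .
  qed
  have pv: "gp_post_var k sn2 x N z = k z z - (\<Sum>i\<in>S. kv i * c i)"
    unfolding gp_post_var_def S_def[symmetric] B_def[symmetric] c_def kv_def
    by (simp add: sum_distrib_left mult_ac)
  have qb: "2 * (\<Sum>i\<in>S. d i * kv i) - (\<Sum>i\<in>S. \<Sum>j\<in>S. d i * d j * a i j) \<le> (\<Sum>i\<in>S. kv i * c i)"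
    by (rule quad_bound[OF fin asym psdA Ac])
  show "gp_post_var k sn2 x N z \<le> k z z - 2 * (\<Sum>i\<in>{1..N}. d i * k z (x i))
          + (\<Sum>i\<in>{1..N}. \<Sum>j\<in>{1..N}. d i * d j * k (x i) (x j)) + sn2 * (\<Sum>i\<in>{1..N}. d i ^ 2)"
    using pv qb Qa[of d] unfolding S_def kv_def by linarith
  define p where "p i = (if i = 0 then z else x i)" for i
  define e where "e i = (if i = 0 then 1 else - c i)" for i
  have h: "\<forall>(n::nat) (p::nat \<Rightarrow> 'a) (c::nat \<Rightarrow> real). (\<Sum>i<n. \<Sum>j<n. c i * c j * k (p i) (p j)) \<ge> 0"
    using psdk unfolding sym_psd_kernel_def by blast
  have "0 \<le> (\<Sum>i<Suc N. \<Sum>j<Suc N. e i * e j * k (p i) (p j))"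
    using h[rule_format, where n="Suc N" and p=p and c=e] by simp
  also have "\<dots> = k z z - 2 * (\<Sum>i\<in>S. c i * kv i) + (\<Sum>i\<in>S. \<Sum>j\<in>S. c i * c j * k (x i) (x j))"
  proof -
    define g where "g i j = e i * e j * k (p i) (p j)" for i j
    have "(\<Sum>i<Suc N. \<Sum>j<Suc N. e i * e j * k (p i) (p j)) = (\<Sum>i<Suc N. \<Sum>j<Suc N. g i j)"
      by (simp add: g_def)
    also have "\<dots> = g 0 0 + (\<Sum>j<N. g 0 (Suc j)) + (\<Sum>i<N. g (Suc i) 0) + (\<Sum>i<N. \<Sum>j<N. g (Suc i) (Suc j))"
      by (simp only: sum.lessThan_Suc_shift sum.distrib add.assoc)
    also have "g 0 0 = k z z" by (simp add: g_def e_def p_def)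
    also have "(\<Sum>j<N. g 0 (Suc j)) = - (\<Sum>i\<in>S. c i * kv i)"
      by (simp add: g_def e_def p_def kv_def S_def sum1N' sum_negf)
    also have "(\<Sum>i<N. g (Suc i) 0) = - (\<Sum>i\<in>S. c i * kv i)"
      by (simp add: g_def e_def p_def kv_def S_def sum1N' sum_negf ksym[of _ z])
    also have "(\<Sum>i<N. \<Sum>j<N. g (Suc i) (Suc j)) = (\<Sum>i\<in>S. \<Sum>j\<in>S. c i * c j * k (x i) (x j))"
      by (simp add: g_def e_def p_def S_def sum1N')
    finally show ?thesis by simp
  qed
  finally have low: "0 \<le> k z z - 2 * (\<Sum>i\<in>S. c i * kv i) + (\<Sum>i\<in>S. \<Sum>j\<in>S. c i * c j * k (x i) (x j))" .
  have "(\<Sum>i\<in>S. \<Sum>j\<in>S. c i * c j * a i j) = (\<Sum>i\<in>S. c i * (\<Sum>j\<in>S. a i j * c j))"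
    by (simp add: sum_distrib_left mult_ac)
  also have "\<dots> = (\<Sum>i\<in>S. c i * kv i)" using Ac by simp
  finally have Qcc: "(\<Sum>i\<in>S. \<Sum>j\<in>S. c i * c j * a i j) = (\<Sum>i\<in>S. c i * kv i)" .
  have "0 \<le> sn2 * (\<Sum>i\<in>S. (c i)^2)" using sn2 by (simp add: sum_nonneg)
  then have "(\<Sum>i\<in>S. \<Sum>j\<in>S. c i * c j * k (x i) (x j)) \<le> (\<Sum>i\<in>S. c i * kv i)"
    using Qa[of c] Qcc by linarith
  then show "0 \<le> gp_post_var k sn2 x N z" using pv low by (simp add: mult.commute)
qed



theorem corollary3p2:
  fixes k :: "'a::euclidean_space \<Rightarrow> 'a \<Rightarrow> real"
    and Lk sn2 :: real and X :: "'a set" and x :: "nat \<Rightarrow> 'a" and z :: 'a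
    and \<rho> :: "nat \<Rightarrow> real"
  assumes "sym_psd_kernel k"
    and "Lk > 0" and "lipschitz_each_arg k Lk"
    and "sn2 > 0"
    and "\<And>i. i \<ge> 1 \<Longrightarrow> x i \<in> X"
    and "z \<in> X"
    and "\<And>N. \<rho> N > 0"
    and "\<And>N. \<rho> N \<le> k z z / Lk"
    and "\<rho> \<longlonglongrightarrow> 0"
    and "filterlim (\<lambda>N. real (ball_count x N (\<rho> N) z)) at_top sequentially"
  shows "(\<lambda>N. gp_post_var k sn2 x N z) \<longlonglongrightarrow> 0"
proof -
  define M where "M N = real (ball_count x N (\<rho> N) z)" for N
  define T where "T N = {i\<in>{1..N}. norm (x i - z) \<le> \<rho> N}" for N
  have cardT: "real (card (T N)) = M N" for N unfolding M_def T_def ball_count_def by simp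
  have lipA: "\<bar>k u w - k v w\<bar> \<le> Lk * norm (u - v)" and lipB: "\<bar>k w u - k w v\<bar> \<le> Lk * norm (u - v)" for u v w
    using assms(3) unfolding lipschitz_each_arg_def by auto
  have evall: "\<forall>Z. eventually (\<lambda>N. Z \<le> M N) sequentially"
    using assms(10) unfolding M_def filterlim_at_top by simp
  have ev: "eventually (\<lambda>N. 1 \<le> M N) sequentially"
    using evall by (rule allE)
  have ub: "gp_post_var k sn2 x N z \<le> 4 * Lk * \<rho> N + sn2 / M N" if MN: "1 \<le> M N" for N
  proof -
    define t where "t = 1 / M N"
    define d where "d i = (if i \<in> T N then t else 0)" for i
    have TS: "T N \<subseteq> {1..N}" unfolding T_def by auto
    have fin: "finite {1..N}" by simp
    have tM: "t * M N = 1" using MN unfolding t_def by simp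
    have t0: "0 \<le> t" using MN unfolding t_def by simp
    have inT: "norm (x i - z) \<le> \<rho> N" if "i \<in> T N" for i using that unfolding T_def by auto
    have s1: "(\<Sum>i\<in>{1..N}. d i * k z (x i)) = t * (\<Sum>i\<in>T N. k z (x i))"
      unfolding d_def by (rule sum_restr[OF fin TS])
    have s2: "(\<Sum>i\<in>{1..N}. \<Sum>j\<in>{1..N}. d i * d j * k (x i) (x j)) = t * (\<Sum>i\<in>T N. t * (\<Sum>j\<in>T N. k (x i) (x j)))"
    proof -
      have "(\<Sum>i\<in>{1..N}. \<Sum>j\<in>{1..N}. d i * d j * k (x i) (x j)) = (\<Sum>i\<in>{1..N}. d i * (t * (\<Sum>j\<in>T N. k (x i) (x j))))"
      proof (intro sum.cong refl)
        fix i
        have "(\<Sum>j\<in>{1..N}. d i * d j * k (x i) (x j)) = d i * (\<Sum>j\<in>{1..N}. d j * k (x i) (x j))"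
          by (simp add: sum_distrib_left mult.assoc)
        also have "(\<Sum>j\<in>{1..N}. d j * k (x i) (x j)) = t * (\<Sum>j\<in>T N. k (x i) (x j))"
          unfolding d_def by (rule sum_restr[OF fin TS])
        finally show "(\<Sum>j\<in>{1..N}. d i * d j * k (x i) (x j)) = d i * (t * (\<Sum>j\<in>T N. k (x i) (x j)))" .
      qed
      also have "\<dots> = t * (\<Sum>i\<in>T N. t * (\<Sum>j\<in>T N. k (x i) (x j)))"
        unfolding d_def by (rule sum_restr[OF fin TS])
      finally show ?thesis .
    qed
    have s3: "(\<Sum>i\<in>{1..N}. d i ^ 2) = t * (t * M N)"
    proof -
      have "(\<Sum>i\<in>{1..N}. d i ^ 2) = (\<Sum>i\<in>{1..N}. (if i \<in> T N then t else 0) * d i)"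
        by (intro sum.cong refl) (simp add: d_def power2_eq_square)
      also have "\<dots> = t * (\<Sum>i\<in>T N. d i)" by (rule sum_restr[OF fin TS])
      also have "(\<Sum>i\<in>T N. d i) = (\<Sum>i\<in>T N. t)" by (intro sum.cong refl) (simp add: d_def)
      also have "\<dots> = t * M N" using cardT[of N] by (simp add: mult.commute)
      finally show ?thesis .
    qed
    have b1: "M N * (k z z - Lk * \<rho> N) \<le> (\<Sum>i\<in>T N. k z (x i))"
    proof -
      have "k z z - Lk * \<rho> N \<le> k z (x i)" if i: "i \<in> T N" for i
      proof -
        have "\<bar>k z (x i) - k z z\<bar> \<le> Lk * norm (x i - z)" by (rule lipB)
        also have "\<dots> \<le> Lk * \<rho> N" using inT[OF i] assms(2) by (simp add: mult_left_mono)
        finally show ?thesis by linarith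
      qed
      then show ?thesis using sum_bounded_below[of "T N" "k z z - Lk * \<rho> N" "\<lambda>i. k z (x i)"] cardT[of N] by simp
    qed
    have b2: "(\<Sum>i\<in>T N. t * (\<Sum>j\<in>T N. k (x i) (x j))) \<le> M N * (k z z + 2 * Lk * \<rho> N)"
    proof -
      have "k (x i) (x j) \<le> k z z + 2 * Lk * \<rho> N" if i: "i \<in> T N" and j: "j \<in> T N" for i j
      proof -
        have "\<bar>k (x i) (x j) - k z (x j)\<bar> \<le> Lk * norm (x i - z)" by (rule lipA)
        also have "\<dots> \<le> Lk * \<rho> N" using inT[OF i] assms(2) by (simp add: mult_left_mono)
        finally have 1: "\<bar>k (x i) (x j) - k z (x j)\<bar> \<le> Lk * \<rho> N" .
        have "\<bar>k z (x j) - k z z\<bar> \<le> Lk * norm (x j - z)" by (rule lipB)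
        also have "\<dots> \<le> Lk * \<rho> N" using inT[OF j] assms(2) by (simp add: mult_left_mono)
        finally show ?thesis using 1 by linarith
      qed
      then have B1: "(\<Sum>j\<in>T N. k (x i) (x j)) \<le> M N * (k z z + 2 * Lk * \<rho> N)" if i: "i \<in> T N" for i
        using sum_bounded_above[of "T N" "\<lambda>j. k (x i) (x j)" "k z z + 2 * Lk * \<rho> N"] cardT[of N] i by simp
      have "t * (\<Sum>j\<in>T N. k (x i) (x j)) \<le> k z z + 2 * Lk * \<rho> N" if i: "i \<in> T N" for i
        using mult_left_mono[OF B1[OF i] t0] tM by (simp add: mult.assoc[symmetric])
      then show ?thesis
        using sum_bounded_above[of "T N" "\<lambda>i. t * (\<Sum>j\<in>T N. k (x i) (x j))" "k z z + 2 * Lk * \<rho> N"] cardT[of N]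
        by simp
    qed
    have c1: "k z z - Lk * \<rho> N \<le> t * (\<Sum>i\<in>T N. k z (x i))"
      using mult_left_mono[OF b1 t0] tM by (simp add: mult.assoc[symmetric])
    have c2: "t * (\<Sum>i\<in>T N. t * (\<Sum>j\<in>T N. k (x i) (x j))) \<le> k z z + 2 * Lk * \<rho> N"
      using mult_left_mono[OF b2 t0] tM by (simp add: mult.assoc[symmetric])
    have c3: "sn2 * (t * (t * M N)) = sn2 / M N" using tM by (simp add: t_def)
    have pv: "gp_post_var k sn2 x N z \<le> k z z - 2 * (t * (\<Sum>i\<in>T N. k z (x i)))
        + t * (\<Sum>i\<in>T N. t * (\<Sum>j\<in>T N. k (x i) (x j))) + sn2 / M N"
      using post_var_props(2)[OF assms(1,4), of x N z d] unfolding s1 s2 s3 c3 .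
    have e4: "4 * Lk * \<rho> N = 4 * (Lk * \<rho> N)" "2 * Lk * \<rho> N = 2 * (Lk * \<rho> N)" by simp_all
    show ?thesis using pv c1 c2 e4 by linarith
  qed
  have lim: "(\<lambda>N. 4 * Lk * \<rho> N + sn2 / M N) \<longlonglongrightarrow> 0"
  proof -
    have "(\<lambda>N. 4 * Lk * \<rho> N) \<longlonglongrightarrow> 4 * Lk * 0" by (intro tendsto_mult tendsto_const assms(9))
    moreover have "(\<lambda>N. sn2 / M N) \<longlonglongrightarrow> 0"
      by (rule tendsto_divide_0[OF tendsto_const filterlim_at_top_imp_at_infinity])
        (use assms(10) in \<open>simp add: M_def\<close>)
    ultimately show ?thesis using tendsto_add by fastforce
  qed
  show ?thesis
  proof (rule tendsto_sandwich[OF _ _ tendsto_const lim])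
    show "\<forall>\<^sub>F N in sequentially. 0 \<le> gp_post_var k sn2 x N z"
      using post_var_props(1)[OF assms(1,4)] by simp
    show "\<forall>\<^sub>F N in sequentially. gp_post_var k sn2 x N z \<le> 4 * Lk * \<rho> N + sn2 / M N"
      using ev by eventually_elim (rule ub)
  qed
qed

end
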